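(* Let $\{(\bm x_j,y_j)\}_{j=1}^N\subseteq\mathbb{R}^P\times\{0,1\}$ and thresholds $0=p_0<p_1<\cdots<p_M<1$. Let $\bm\rho\in\mathbb{R}^P\setminus\{0\}$ and $\bm t=(t_0,\dots,t_M)\in\mathbb{R}^{M+1}$ satisfy $-\max_j|\bm x_j\bm\rho|\le t_0\le t_1\le\cdots\le t_M\le\max_j|\bm x_j\bm\rho|$. Let $\|X\|_\infty=\max_{1\le j\le N}\|\bm x_j\|_1$ and $\gamma_{\min}=\frac{\min_{i,j}|\bm x_j\bm\rho-t_i|}{\|\bm\rho\|_\infty}$ (minimum over $0\le i\le M$, $1\le j\le N$). Let $\Lambda$ and $T_{\max}$ be positive integers. If $\gamma_{\min}>0$, $\Lambda>\frac{\|X\|_\infty+1}{2\gamma_{\min}}$ and $T_{\max}\ge\lceil\Lambda\|X\|_\infty\rceil$, then there exist $\bm\lambda\in\{-\Lambda,\dots,\Lambda\}^P$ and $\bm T\in\{-T_{\max},\dots,T_{\max}\}^{M+1}$ with $\mathrm{WNB}(\bm\lambda,\bm T)\ge\mathrm{WNB}(\bm\rho,\bm t)$.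
   Context: Samples $\bm x_j$ are row vectors, so $\bm x_j\bm\lambda$ is a scalar. Weights $\omega_0,\dots,\omega_M\in[0,1]$ with $\sum_i\omega_i=1$ are fixed. For coefficients $\bm\lambda\in\mathbb{R}^P$ and intercepts $\bm T=(T_0,\dots,T_M)$, the weighted net benefit is $\mathrm{WNB}(\bm\lambda,\bm T)=\sum_{i=0}^M\Big(\omega_i\sum_{j=1}^N I(\bm x_j\bm\lambda\ge T_i,\,y_j=1)-\frac{\omega_ip_i}{1-p_i}\sum_{j=1}^N I(\bm x_j\bm\lambda\ge T_i,\,y_j=0)\Big)$, where $I$ is the indicator function. *)

theory Defs
  imports Complex_Main
begin

text \<open>Samples x j (j = 1..N) are row vectors with coordinates x j k, k = 1..P.\<close>

definition dotp :: "nat \<Rightarrow> (nat \<Rightarrow> real) \<Rightarrow> (nat \<Rightarrow> real) \<Rightarrow> real" where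
  "dotp P xj v = (\<Sum>k=1..P. xj k * v k)"

definition WNB :: "nat \<Rightarrow> nat \<Rightarrow> nat \<Rightarrow> (nat \<Rightarrow> nat \<Rightarrow> real) \<Rightarrow> (nat \<Rightarrow> nat)
    \<Rightarrow> (nat \<Rightarrow> real) \<Rightarrow> (nat \<Rightarrow> real) \<Rightarrow> (nat \<Rightarrow> real) \<Rightarrow> (nat \<Rightarrow> real) \<Rightarrow> real" where
  "WNB N M P x y \<omega> p lam T =
     (\<Sum>i=0..M. \<omega> i * (\<Sum>j=1..N. if dotp P (x j) lam \<ge> T i \<and> y j = 1 then 1 else 0)
        - \<omega> i * p i / (1 - p i) * (\<Sum>j=1..N. if dotp P (x j) lam \<ge> T i \<and> y j = 0 then 1 else 0))"

definition norm_inf_vec :: "nat \<Rightarrow> (nat \<Rightarrow> real) \<Rightarrow> real" where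
  "norm_inf_vec P v = Max ((\<lambda>k. \<bar>v k\<bar>) ` {1..P})"

definition norm_inf_mat :: "nat \<Rightarrow> nat \<Rightarrow> (nat \<Rightarrow> nat \<Rightarrow> real) \<Rightarrow> real" where
  "norm_inf_mat N P x = Max ((\<lambda>j. \<Sum>k=1..P. \<bar>x j k\<bar>) ` {1..N})"

definition gamma_min :: "nat \<Rightarrow> nat \<Rightarrow> nat \<Rightarrow> (nat \<Rightarrow> nat \<Rightarrow> real) \<Rightarrow> (nat \<Rightarrow> real) \<Rightarrow> (nat \<Rightarrow> real) \<Rightarrow> real" where
  "gamma_min N M P x \<rho> t =
     Min ((\<lambda>(i,j). \<bar>dotp P (x j) \<rho> - t i\<bar>) ` ({0..M} \<times> {1..N})) / norm_inf_vec P \<rho>"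

end

theory Submission
  imports Defs
begin

lemma rnd_err: "\<bar>real_of_int \<lfloor>r + 1/2\<rfloor> - r\<bar> \<le> 1/2"
  using floor_correct[of "r+1/2"] by linarith

lemma rnd_ceil: "\<bar>r\<bar> \<le> B \<Longrightarrow> \<bar>\<lfloor>(r::real) + 1/2\<rfloor>\<bar> \<le> \<lceil>B\<rceil>"
proof -
  assume a: "\<bar>r\<bar> \<le> B"
  have "\<lfloor>r + 1/2\<rfloor> \<le> \<lceil>B\<rceil>" using a
  proof -
    have "real_of_int \<lfloor>r + 1/2\<rfloor> \<le> r + 1/2" by simp
    moreover have "B \<le> real_of_int \<lceil>B\<rceil>" by simp
    ultimately have "real_of_int \<lfloor>r + 1/2\<rfloor> < real_of_int \<lceil>B\<rceil> + 1" using a by linarith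
    thus ?thesis by linarith
  qed
  moreover have "- \<lceil>B\<rceil> \<le> \<lfloor>r + 1/2\<rfloor>" using a
  proof -
    have "r + 1/2 - 1 < real_of_int \<lfloor>r + 1/2\<rfloor>" using floor_correct[of "r+1/2"] by linarith
    moreover have "real_of_int \<lceil>B\<rceil> < B + 1" using ceiling_correct[of B] by linarith
    ultimately have "- real_of_int \<lceil>B\<rceil> - 1 < real_of_int \<lfloor>r + 1/2\<rfloor>" using a by linarith
    thus ?thesis by linarith
  qed
  ultimately show ?thesis by linarith
qed

lemma rnd_int: "\<bar>r\<bar> \<le> real_of_int A \<Longrightarrow> \<bar>\<lfloor>(r::real) + 1/2\<rfloor>\<bar> \<le> A"
  using rnd_ceil[of r "real_of_int A"] by simp

lemma dotp_scale: "dotp P xj (\<lambda>k. c * v k) = c * dotp P xj v"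
  unfolding dotp_def by (simp add: sum_distrib_left algebra_simps)

lemma dotp_diff: "dotp P xj u - dotp P xj v = (\<Sum>k=1..P. xj k * (u k - v k))"
  unfolding dotp_def by (simp add: sum_subtractf algebra_simps)

lemma chain_le: "\<forall>i<M. t i \<le> t (Suc i) \<Longrightarrow> a \<le> b \<Longrightarrow> b \<le> M \<Longrightarrow> (t a :: real) \<le> t b"
proof (induction b)
  case 0 then show ?case by simp
next
  case (Suc b)
  show ?case
  proof (cases "a = Suc b")
    case True then show ?thesis by simp
  next
    case False
    then have "t a \<le> t b" using Suc by simp
    also have "t b \<le> t (Suc b)" using Suc.prems by simp
    finally show ?thesis .
  qed
qed

theorem theorem3:
  fixes N M P :: nat
    and x :: "nat \<Rightarrow> nat \<Rightarrow> real" and y :: "nat \<Rightarrow> nat"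
    and \<omega> p :: "nat \<Rightarrow> real"
    and \<rho> t :: "nat \<Rightarrow> real"
    and \<Lambda> Tmax :: int
  assumes y01: "\<forall>j\<in>{1..N}. y j \<in> {0, 1}"
    and \<omega>_range: "\<forall>i\<in>{0..M}. 0 \<le> \<omega> i \<and> \<omega> i \<le> 1"
    and \<omega>_sum: "(\<Sum>i=0..M. \<omega> i) = 1"
    and p0: "p 0 = 0"
    and p_mono: "\<forall>i<M. p i < p (Suc i)"
    and pM: "p M < 1"
    and \<rho>_nz: "\<exists>k\<in>{1..P}. \<rho> k \<noteq> 0"
    and t0: "- Max ((\<lambda>j. \<bar>dotp P (x j) \<rho>\<bar>) ` {1..N}) \<le> t 0"
    and t_mono: "\<forall>i<M. t i \<le> t (Suc i)"
    and tM: "t M \<le> Max ((\<lambda>j. \<bar>dotp P (x j) \<rho>\<bar>) ` {1..N})"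
    and \<Lambda>_pos: "\<Lambda> > 0" and Tmax_pos: "Tmax > 0"
    and \<gamma>_pos: "gamma_min N M P x \<rho> t > 0"
    and \<Lambda>_big: "real_of_int \<Lambda> > (norm_inf_mat N P x + 1) / (2 * gamma_min N M P x \<rho> t)"
    and Tmax_big: "Tmax \<ge> \<lceil>real_of_int \<Lambda> * norm_inf_mat N P x\<rceil>"
  shows "\<exists>lam T :: nat \<Rightarrow> int.
           (\<forall>k\<in>{1..P}. \<bar>lam k\<bar> \<le> \<Lambda>) \<and> (\<forall>i\<in>{0..M}. \<bar>T i\<bar> \<le> Tmax) \<and>
           WNB N M P x y \<omega> p (\<lambda>k. real_of_int (lam k)) (\<lambda>i. real_of_int (T i))
             \<ge> WNB N M P x y \<omega> p \<rho> t"
proof (cases "N = 0")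
  case True
  show ?thesis
    by (rule exI[of _ "\<lambda>_. 0"], rule exI[of _ "\<lambda>_. 0"])
       (use True \<Lambda>_pos Tmax_pos in \<open>simp add: WNB_def\<close>)
next
  case False
  define n where "n = norm_inf_vec P \<rho>"
  define g where "g = gamma_min N M P x \<rho> t"
  define X where "X = norm_inf_mat N P x"
  define L where "L = real_of_int \<Lambda>"
  define Mx where "Mx = Max ((\<lambda>j. \<bar>dotp P (x j) \<rho>\<bar>) ` {1..N})"
  have rho_le: "\<bar>\<rho> k\<bar> \<le> n" if "k \<in> {1..P}" for k
    unfolding n_def norm_inf_vec_def using that by (intro Max_ge) auto
  obtain k0 where k0: "k0 \<in> {1..P}" "\<rho> k0 \<noteq> 0" using \<rho>_nz by blast
  have npos: "n > 0" using rho_le[OF k0(1)] k0(2) by linarith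
  have Lpos: "L > 0" using \<Lambda>_pos L_def by simp
  have F1: "g * n \<le> \<bar>dotp P (x j) \<rho> - t i\<bar>" if "i \<in> {0..M}" "j \<in> {1..N}" for i j
  proof -
    have "g * n = Min ((\<lambda>(i,j). \<bar>dotp P (x j) \<rho> - t i\<bar>) ` ({0..M} \<times> {1..N}))"
      unfolding g_def gamma_min_def n_def[symmetric] using npos by simp
    also have "\<dots> \<le> \<bar>dotp P (x j) \<rho> - t i\<bar>"
      using that by (intro Min_le) auto
    finally show ?thesis .
  qed
  have F2: "(\<Sum>k=1..P. \<bar>x j k\<bar>) \<le> X" if "j \<in> {1..N}" for j
    unfolding X_def norm_inf_mat_def using that by (intro Max_ge) auto
  have F3: "\<bar>t i\<bar> \<le> Mx" if "i \<in> {0..M}" for i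
  proof -
    have "t 0 \<le> t i" "t i \<le> t M" using that chain_le[OF t_mono] by auto
    then show ?thesis using t0 tM Mx_def by linarith
  qed
  have F4: "Mx \<le> n * X"
  proof -
    have "\<bar>dotp P (x j) \<rho>\<bar> \<le> n * X" if "j \<in> {1..N}" for j
    proof -
      have "\<bar>dotp P (x j) \<rho>\<bar> \<le> (\<Sum>k=1..P. \<bar>x j k * \<rho> k\<bar>)"
        unfolding dotp_def by (rule sum_abs)
      also have "\<dots> \<le> (\<Sum>k=1..P. \<bar>x j k\<bar> * n)"
        by (intro sum_mono) (simp add: abs_mult mult_left_mono rho_le)
      also have "\<dots> = n * (\<Sum>k=1..P. \<bar>x j k\<bar>)" by (simp add: sum_distrib_left mult.commute)
      also have "\<dots> \<le> n * X" using F2[OF that] npos by simp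
      finally show ?thesis .
    qed
    then show ?thesis unfolding Mx_def using False by (subst Max_le_iff) auto
  qed
  have LgX: "L * g > (X + 1) / 2"
  proof -
    have "g > 0" using \<gamma>_pos g_def by simp
    then show ?thesis using \<Lambda>_big unfolding L_def[symmetric] X_def[symmetric] g_def[symmetric]
      by (simp add: pos_divide_less_eq mult.commute)
  qed
  define v where "v k = (L / n) * \<rho> k" for k
  define lam where "lam k = \<lfloor>v k + 1/2\<rfloor>" for k
  define T where "T i = \<lfloor>L / n * t i + 1/2\<rfloor>" for i
  have lam_ok: "\<forall>k\<in>{1..P}. \<bar>lam k\<bar> \<le> \<Lambda>"
  proof
    fix k assume k: "k \<in> {1..P}"
    have "\<bar>v k\<bar> = L / n * \<bar>\<rho> k\<bar>" using npos Lpos by (simp add: v_def abs_mult)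
    also have "\<dots> \<le> L / n * n" using rho_le[OF k] npos Lpos by (intro mult_left_mono) auto
    also have "\<dots> = L" using npos by simp
    finally show "\<bar>lam k\<bar> \<le> \<Lambda>" unfolding lam_def L_def by (rule rnd_int)
  qed
  have T_ok: "\<forall>i\<in>{0..M}. \<bar>T i\<bar> \<le> Tmax"
  proof
    fix i assume i: "i \<in> {0..M}"
    have "\<bar>L / n * t i\<bar> = L / n * \<bar>t i\<bar>" using npos Lpos by (simp add: abs_mult)
    also have "\<dots> \<le> L / n * (n * X)" using F3[OF i] F4 npos Lpos by (intro mult_left_mono) auto
    also have "\<dots> = L * X" using npos by simp
    finally have "\<bar>T i\<bar> \<le> \<lceil>L * X\<rceil>" unfolding T_def by (rule rnd_ceil)
    then show "\<bar>T i\<bar> \<le> Tmax" using Tmax_big L_def X_def by simp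
  qed
  have key: "(dotp P (x j) (\<lambda>k. real_of_int (lam k)) \<ge> real_of_int (T i)) = (dotp P (x j) \<rho> \<ge> t i)"
    if i: "i \<in> {0..M}" and j: "j \<in> {1..N}" for i j
  proof -
    define d where "d = dotp P (x j) \<rho>"
    have dv: "dotp P (x j) v = L / n * d" unfolding v_def d_def by (rule dotp_scale)
    have err: "\<bar>dotp P (x j) (\<lambda>k. real_of_int (lam k)) - dotp P (x j) v\<bar> \<le> X / 2"
    proof -
      have "\<bar>dotp P (x j) (\<lambda>k. real_of_int (lam k)) - dotp P (x j) v\<bar>
          = \<bar>\<Sum>k=1..P. x j k * (real_of_int (lam k) - v k)\<bar>" by (simp add: dotp_diff)
      also have "\<dots> \<le> (\<Sum>k=1..P. \<bar>x j k * (real_of_int (lam k) - v k)\<bar>)" by (rule sum_abs)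
      also have "\<dots> \<le> (\<Sum>k=1..P. \<bar>x j k\<bar> * (1/2))"
        unfolding abs_mult lam_def by (intro sum_mono mult_left_mono rnd_err) simp
      also have "\<dots> = (\<Sum>k=1..P. \<bar>x j k\<bar>) / 2" by (simp add: sum_distrib_right)
      also have "\<dots> \<le> X / 2" using F2[OF j] by simp
      finally show ?thesis .
    qed
    have marg: "g * n \<le> \<bar>d - t i\<bar>" using F1[OF i j] d_def by simp
    have Terr: "\<bar>real_of_int (T i) - L / n * t i\<bar> \<le> 1/2" unfolding T_def by (rule rnd_err)
    have Lmarg: "L * g \<le> \<bar>L / n * d - L / n * t i\<bar>"
    proof -
      have "L * g = L / n * (g * n)" using npos by simp
      also have "\<dots> \<le> L / n * \<bar>d - t i\<bar>" using marg npos Lpos by (intro mult_left_mono) auto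
      also have "\<dots> = \<bar>L / n * (d - t i)\<bar>" using npos Lpos
        by (simp add: abs_mult)
      also have "\<dots> = \<bar>L / n * d - L / n * t i\<bar>"
        by (simp only: right_diff_distrib)
      finally show ?thesis .
    qed
    have "L / n > 0" using npos Lpos by simp
    then have mono: "(L / n * d \<ge> L / n * t i) = (d \<ge> t i)" by (rule mult_le_cancel_left_pos)
    have gen: "(A \<ge> Ti) = (B \<ge> C)" if "\<bar>A - B\<bar> \<le> X / 2" "\<bar>Ti - C\<bar> \<le> 1/2"
      "Lg \<le> \<bar>B - C\<bar>" "Lg > (X + 1) / 2" for A B C Ti Lg :: real
      using that by (auto simp: abs_le_iff abs_if split: if_splits)
    show ?thesis unfolding d_def[symmetric] mono[symmetric]
      by (rule gen[OF err[unfolded dv] Terr Lmarg LgX])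
  qed
  have "WNB N M P x y \<omega> p (\<lambda>k. real_of_int (lam k)) (\<lambda>i. real_of_int (T i)) = WNB N M P x y \<omega> p \<rho> t"
    unfolding WNB_def
    by (intro sum.cong refl arg_cong2[where f="(-)"] arg_cong2[where f="(*)"]) (simp_all add: key)
  then show ?thesis using lam_ok T_ok by (intro exI[of _ lam] exI[of _ T]) simp
qed

end
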